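(* Let $\mathcal O$ be a set of operations with $\emptyset \neq \mathcal O \subseteq \{\cup,\cap,\overline{\phantom{c}},+,/\}$ and let $C$ be an $\mathcal O$-circuit. Then there exists a natural number $n \le 2^{|C|}+1$ such that for every natural number $z \ge n$ we have $z \in I(C)$ if and only if $n \in I(C)$.
   Context: Natural numbers include $0$. For $A,B\subseteq\mathbb N$: $A\cup B$, $A\cap B$ are the usual operations, $\overline{A}=\mathbb N\setminus A$, $A+B=\{a+b: a\in A, b\in B\}$, $A\times B=\{a\cdot b: a\in A, b\in B\}$, and $A/B=\{c\in\mathbb N:\exists a\in A\ \exists b\in B\setminus\{0\}: a=c\cdot b\}$ (exact integer division without remainder or rounding). For $\emptyset\ne\mathcal O\subseteq\{\cup,\cap,\overline{\phantom{c}},+,\times,/\}$, an $\mathcal O$-circuit $C=(V,E,g_C,\alpha)$ is a finite acyclic directed multigraph with gate set $V\subseteq\mathbb N$, every gate having indegree $0$, $1$ or $2$, a designated output gate $g_C\in V$, and a labeling $\alpha$: gates of indegree $0$ (input gates) are labeled by natural numbers, gates of indegree $1$ are labeled $\overline{\phantom{c}}$ (allowed only if $\overline{\phantom{c}}\in\mathcal O$), and gates of indegree $2$ are labeled by an operation in $\mathcal O\setminus\{\overline{\phantom{c}}\}$. The result set $I(g)\subseteq\mathbb N$ is defined inductively: $I(g)=\{\alpha(g)\}$ for an input gate; $I(g)=\mathbb N\setminus I(p)$ for a complement gate with predecessor $p$; $I(g)=I(g_1)\,\sigma\,I(g_2)$ for a gate labeled $\sigma$ with predecessors $g_1\le g_2$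 (a double edge from one gate gives $g_1=g_2$). $I(C)=I(g_C)$. A circuit is encoded as a bit string listing its gates in reverse topological order, each gate as the triple (gate name, label, list of predecessors), with all numbers (including input labels) in binary; $|C|$ denotes the length of this encoding. *)

theory Defs
  imports Main
begin

datatype op = Union | Inter | Compl | Plus | Times | Div

text \<open>A gate: an input gate labelled by a natural number, a complement gate with one
  predecessor (given by its gate name), or a binary gate with an operation and
  two predecessors g1 \<le> g2 (given by gate names; g1 = g2 models a double edge).\<close>
datatype gate = Inp nat | Cmp nat | Bin op nat nat

text \<open>A circuit: a list of named gates in topological order (each predecessor is
  the name of an earlier gate), together with the name of the output gate.
  Every finite acyclic multigraph admits such a listing.\<close>
record circuit =
  gates :: "(nat \<times> gate) list"
  outg :: nat

definition set_plus :: "nat set \<Rightarrow> nat set \<Rightarrow> nat set" where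
  "set_plus A B = {a + b | a b. a \<in> A \<and> b \<in> B}"

definition set_times :: "nat set \<Rightarrow> nat set \<Rightarrow> nat set" where
  "set_times A B = {a * b | a b. a \<in> A \<and> b \<in> B}"

definition set_div :: "nat set \<Rightarrow> nat set \<Rightarrow> nat set" where
  "set_div A B = {c. \<exists>a\<in>A. \<exists>b\<in>B - {0}. a = c * b}"

fun apply_op :: "op \<Rightarrow> nat set \<Rightarrow> nat set \<Rightarrow> nat set" where
  "apply_op Union A B = A \<union> B"
| "apply_op Inter A B = A \<inter> B"
| "apply_op Compl A B = UNIV - A"
| "apply_op Plus A B = set_plus A B"
| "apply_op Times A B = set_times A B"
| "apply_op Div A B = set_div A B"

fun preds :: "gate \<Rightarrow> nat list" where
  "preds (Inp a) = []"
| "preds (Cmp p) = [p]"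
| "preds (Bin o' p q) = [p, q]"

definition wf_circuit :: "op set \<Rightarrow> circuit \<Rightarrow> bool" where
  "wf_circuit Ops C \<longleftrightarrow>
     distinct (map fst (gates C)) \<and>
     outg C \<in> set (map fst (gates C)) \<and>
     (\<forall>i < length (gates C).
        set (preds (snd (gates C ! i))) \<subseteq> set (map fst (take i (gates C))) \<and>
        (case snd (gates C ! i) of
           Inp a \<Rightarrow> True
         | Cmp p \<Rightarrow> Compl \<in> Ops
         | Bin o' p q \<Rightarrow> o' \<in> Ops \<and> o' \<noteq> Compl \<and> p \<le> q))"

fun eval_step :: "(nat \<Rightarrow> nat set) \<Rightarrow> nat \<times> gate \<Rightarrow> (nat \<Rightarrow> nat set)" where
  "eval_step env (g, Inp a) = env(g := {a})"
| "eval_step env (g, Cmp p) = env(g := UNIV - env p)"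
| "eval_step env (g, Bin o' p q) = env(g := apply_op o' (env p) (env q))"

definition circuit_set :: "circuit \<Rightarrow> nat set" where
  "circuit_set C = foldl eval_step (\<lambda>_. {}) (gates C) (outg C)"

text \<open>Length of the binary representation of a natural number (bitlen 0 = 1).\<close>
fun bitlen :: "nat \<Rightarrow> nat" where
  "bitlen n = (if n < 2 then 1 else 1 + bitlen (n div 2))"

fun label_len :: "gate \<Rightarrow> nat" where
  "label_len (Inp a) = bitlen a"
| "label_len (Cmp p) = 1"
| "label_len (Bin o' p q) = 1"

text \<open>|C|: each gate encoded as (name, label, predecessor list), numbers in binary.\<close>
definition gate_size :: "nat \<times> gate \<Rightarrow> nat" where
  "gate_size g = bitlen (fst g) + label_len (snd g) + sum_list (map bitlen (preds (snd g)))"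

definition circuit_size :: "circuit \<Rightarrow> nat" where
  "circuit_size C = sum_list (map gate_size (gates C))"

end

theory Submission
  imports Defs
begin

definition evc :: "nat set \<Rightarrow> nat \<Rightarrow> bool" where
  "evc S t \<longleftrightarrow> (\<forall>z\<ge>t. z \<in> S \<longleftrightarrow> t \<in> S)"

lemma evc_mono: "evc S t \<Longrightarrow> t \<le> t' \<Longrightarrow> evc S t'"
  unfolding evc_def by (metis order_trans)

lemma evc_all: "evc S t \<Longrightarrow> t \<in> S \<Longrightarrow> z \<ge> t \<Longrightarrow> z \<in> S"
  unfolding evc_def by blast

lemma evc_none: "evc S t \<Longrightarrow> t \<notin> S \<Longrightarrow> z \<in> S \<Longrightarrow> z < t"
  unfolding evc_def by (meson not_le)

declare bitlen.simps[simp del]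

lemma bitlen_lt: "n < 2 \<Longrightarrow> bitlen n = 1"
  by (subst bitlen.simps) simp

lemma bitlen_ge: "\<not> n < 2 \<Longrightarrow> bitlen n = 1 + bitlen (n div 2)"
  by (subst bitlen.simps) simp

lemma bitlen_bound: "n < 2 ^ bitlen n"
proof (induction n rule: bitlen.induct)
  case (1 n)
  show ?case
  proof (cases "n < 2")
    case True then show ?thesis by (simp add: bitlen_lt)
  next
    case False
    then have "n div 2 < 2 ^ bitlen (n div 2)" using 1 by simp
    moreover have "bitlen n = 1 + bitlen (n div 2)" using False by (rule bitlen_ge)
    ultimately show ?thesis by simp
  qed
qed

lemma bitlen_pos: "bitlen n \<ge> 1"
proof (cases "n < 2")
  case True then show ?thesis using bitlen_lt[OF True] by simp
next
  case False then show ?thesis using bitlen_ge[OF False] by simp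
qed

lemma evc_single: "evc {a} (a + 1)"
  unfolding evc_def by simp

lemma evc_compl: "evc S t \<Longrightarrow> evc (UNIV - S) t"
  unfolding evc_def by blast

lemma evc_un: assumes a: "evc S t1" and b: "evc T t2" shows "evc (S \<union> T) (max t1 t2)"
  unfolding evc_def
proof (intro allI impI)
  fix z assume z: "max t1 t2 \<le> z"
  have c1: "t1 \<le> z" "t1 \<le> max t1 t2" "t2 \<le> z" "t2 \<le> max t1 t2" using z by auto
  have 1: "z \<in> S \<longleftrightarrow> t1 \<in> S" "max t1 t2 \<in> S \<longleftrightarrow> t1 \<in> S"
    using a c1 unfolding evc_def by blast+
  have 2: "z \<in> T \<longleftrightarrow> t2 \<in> T" "max t1 t2 \<in> T \<longleftrightarrow> t2 \<in> T"
    using b c1 unfolding evc_def by blast+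
  show "z \<in> S \<union> T \<longleftrightarrow> max t1 t2 \<in> S \<union> T" using 1 2 by blast
qed

lemma evc_int: assumes a: "evc S t1" and b: "evc T t2" shows "evc (S \<inter> T) (max t1 t2)"
  unfolding evc_def
proof (intro allI impI)
  fix z assume z: "max t1 t2 \<le> z"
  have c1: "t1 \<le> z" "t1 \<le> max t1 t2" "t2 \<le> z" "t2 \<le> max t1 t2" using z by auto
  have 1: "z \<in> S \<longleftrightarrow> t1 \<in> S" "max t1 t2 \<in> S \<longleftrightarrow> t1 \<in> S"
    using a c1 unfolding evc_def by blast+
  have 2: "z \<in> T \<longleftrightarrow> t2 \<in> T" "max t1 t2 \<in> T \<longleftrightarrow> t2 \<in> T"
    using b c1 unfolding evc_def by blast+
  show "z \<in> S \<inter> T \<longleftrightarrow> max t1 t2 \<in> S \<inter> T" using 1 2 by blast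
qed

lemma evc_plus:
  assumes s: "evc S t1" and t: "evc T t2"
  shows "evc (set_plus S T) (t1 + t2)"
proof (cases "S = {} \<or> T = {}")
  case True
  then have "set_plus S T = {}" unfolding set_plus_def by blast
  then show ?thesis unfolding evc_def by blast
next
  case False
  then obtain a b where ab: "a \<in> S" "b \<in> T" by blast
  obtain a' where a': "a' \<in> S" "a' \<le> t1"
  proof (cases "t1 \<in> S")
    case True then show ?thesis using that by blast
  next
    case False have "a < t1" using evc_none[OF s False ab(1)] .
    then show ?thesis using that ab(1) by simp
  qed
  obtain b' where b': "b' \<in> T" "b' \<le> t2"
  proof (cases "t2 \<in> T")
    case True then show ?thesis using that by blast
  next
    case False have "b < t2" using evc_none[OF t False ab(2)] .
    then show ?thesis using that ab(2) by simp
  qed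
  show ?thesis
  proof (cases "t1 \<in> S \<or> t2 \<in> T")
    case True
    have all: "z \<in> set_plus S T" if z: "z \<ge> t1 + t2" for z
      using True
    proof
      assume h: "t1 \<in> S"
      have "z - b' \<ge> t1" using z b' by linarith
      then have "z - b' \<in> S" using evc_all[OF s h] by blast
      moreover have "z = (z - b') + b'" using z b' by linarith
      ultimately show ?thesis unfolding set_plus_def using b'(1) by blast
    next
      assume h: "t2 \<in> T"
      have "z - a' \<ge> t2" using z a' by linarith
      then have "z - a' \<in> T" using evc_all[OF t h] by blast
      moreover have "z = a' + (z - a')" using z a' by linarith
      ultimately show ?thesis unfolding set_plus_def using a'(1) by blast
    qed
    have "t1 + t2 \<in> set_plus S T" using all by blast
    then show ?thesis unfolding evc_def using all by blast
  next
    case False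
    have none: "z \<notin> set_plus S T" if "z \<ge> t1 + t2" for z
    proof
      assume "z \<in> set_plus S T"
      then obtain x y where xy: "x \<in> S" "y \<in> T" "z = x + y" unfolding set_plus_def by blast
      have "x < t1" using evc_none[OF s _ xy(1)] False by blast
      moreover have "y < t2" using evc_none[OF t _ xy(2)] False by blast
      ultimately show False using that xy(3) by linarith
    qed
    have "t1 + t2 \<notin> set_plus S T" using none by blast
    then show ?thesis unfolding evc_def using none by blast
  qed
qed

lemma evc_div:
  assumes s: "evc S t1"
  shows "evc (set_div S T) t1"
proof (cases "t1 \<in> S \<and> (\<exists>b\<in>T. b > 0)")
  case True
  then obtain b where b: "b \<in> T" "b > 0" by blast
  have all: "z \<in> set_div S T" if "z \<ge> t1" for z
  proof -
    have "z * b \<ge> z" using b by simp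
    then have "z * b \<ge> t1" using that by linarith
    then have "z * b \<in> S" using evc_all[OF s] True by blast
    then show ?thesis unfolding set_div_def using b by blast
  qed
  have "t1 \<in> set_div S T" using all by blast
  then show ?thesis unfolding evc_def using all by blast
next
  case False
  have none: "z \<notin> set_div S T" if "z \<ge> t1" for z
  proof
    assume "z \<in> set_div S T"
    then obtain a b where ab: "a \<in> S" "b \<in> T" "b > 0" "a = z * b" unfolding set_div_def by blast
    then have "a \<ge> z" by simp
    then have "a \<ge> t1" using that by linarith
    have "t1 \<in> S"
    proof (rule ccontr)
      assume "t1 \<notin> S"
      then have "a < t1" using evc_none[OF s _ ab(1)] by blast
      then show False using \<open>a \<ge> t1\<close> by linarith
    qed
    then show False using False ab by blast
  qed
  have "t1 \<notin> set_div S T" using none by blast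
  then show ?thesis unfolding evc_def using none by blast
qed

definition okg :: "nat \<times> gate \<Rightarrow> bool" where
  "okg x \<longleftrightarrow> (case snd x of Bin o' p q \<Rightarrow> o' \<in> {Union, Inter, Plus, Div} | _ \<Rightarrow> True)"

lemma gate_size_ge: "gate_size x \<ge> 1"
  unfolding gate_size_def using bitlen_pos[of "fst x"] by simp

lemma step:
  assumes inv: "\<forall>g. \<exists>t\<le>2^k. evc (env g) t" and ok: "okg x"
  shows "\<forall>g. \<exists>t\<le>2^(k + gate_size x). evc (eval_step env x g) t"
proof
  fix g
  obtain h gt where x: "x = (h, gt)" by fastforce
  have ge: "1 \<le> gate_size x" by (rule gate_size_ge)
  have "(2::nat)^(k+1) \<le> 2^(k + gate_size x)"
    by (rule power_increasing) (use ge in simp_all)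
  then have mono: "(2::nat)^k * 2 \<le> 2^(k + gate_size x)" by simp
  have mono1: "(2::nat)^k \<le> 2^(k + gate_size x)" using mono by simp
  show "\<exists>t\<le>2^(k + gate_size x). evc (eval_step env x g) t"
  proof (cases "g = h")
    case False
    then have "eval_step env x g = env g" unfolding x by (cases gt) simp_all
    moreover obtain t where t: "t \<le> 2^k" "evc (env g) t" using inv by blast
    moreover have "t \<le> 2^(k + gate_size x)" using t(1) mono1 by (rule le_trans)
    ultimately show ?thesis by auto
  next
    case True
    show ?thesis
    proof (cases gt)
      case (Inp a)
      have e: "eval_step env x g = {a}" using True x Inp by simp
      have "a + 1 \<le> 2 ^ bitlen a" using bitlen_bound[of a] by simp
      also have "\<dots> \<le> 2 ^ (k + gate_size x)"
        by (rule power_increasing) (simp_all add: x Inp gate_size_def)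
      finally have "a + 1 \<le> 2 ^ (k + gate_size x)" .
      moreover have "evc (eval_step env x g) (a + 1)" unfolding e by (rule evc_single)
      ultimately show ?thesis by blast
    next
      case (Cmp p)
      have e: "eval_step env x g = UNIV - env p" using True x Cmp by simp
      obtain t where t: "t \<le> 2^k" "evc (env p) t" using inv by blast
      have "t \<le> 2^(k + gate_size x)" using t(1) mono1 by (rule le_trans)
      moreover have "evc (eval_step env x g) t" unfolding e by (rule evc_compl[OF t(2)])
      ultimately show ?thesis by blast
    next
      case (Bin o' p q)
      obtain t1 where t1: "t1 \<le> 2^k" "evc (env p) t1" using inv by blast
      obtain t2 where t2: "t2 \<le> 2^k" "evc (env q) t2" using inv by blast
      have e: "eval_step env x g = apply_op o' (env p) (env q)" using True x Bin by simp
      have o: "o' \<in> {Union, Inter, Plus, Div}" using ok x Bin unfolding okg_def by simp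
      have b1: "t1 + t2 \<le> 2^(k + gate_size x)" using t1(1) t2(1) mono by linarith
      have "max t1 t2 \<le> 2^k" using t1(1) t2(1) by simp
      then have b2: "max t1 t2 \<le> 2^(k + gate_size x)" using mono1 by (rule le_trans)
      have b3: "t1 \<le> 2^(k + gate_size x)" using t1(1) mono1 by linarith
      show ?thesis
      proof (cases o')
        case Union
        have "evc (eval_step env x g) (max t1 t2)" unfolding e Union apply_op.simps by (rule evc_un[OF t1(2) t2(2)])
        then show ?thesis using b2 by blast
      next
        case Inter
        have "evc (eval_step env x g) (max t1 t2)" unfolding e Inter apply_op.simps by (rule evc_int[OF t1(2) t2(2)])
        then show ?thesis using b2 by blast
      next
        case Plus
        have "evc (eval_step env x g) (t1 + t2)" unfolding e Plus apply_op.simps by (rule evc_plus[OF t1(2) t2(2)])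
        then show ?thesis using b1 by blast
      next
        case Div
        have "evc (eval_step env x g) t1" unfolding e Div apply_op.simps by (rule evc_div[OF t1(2)])
        then show ?thesis using b3 by blast
      qed (use o in auto)
    qed
  qed
qed

lemma fold_inv:
  "\<forall>x\<in>set gs. okg x \<Longrightarrow> \<forall>g. \<exists>t\<le>2^k. evc (env g) t \<Longrightarrow>
   \<forall>g. \<exists>t\<le>2^(k + sum_list (map gate_size gs)). evc (foldl eval_step env gs g) t"
proof (induction gs arbitrary: env k)
  case Nil then show ?case by simp
next
  case (Cons x gs)
  have "\<forall>g. \<exists>t\<le>2^(k + gate_size x). evc (eval_step env x g) t"
    using step Cons.prems by simp
  from Cons.IH[OF _ this] Cons.prems(1) show ?case by (simp add: add.assoc)
qed

theorem lemma1:
  fixes Ops :: "op set" and C :: circuit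
  assumes "Ops \<noteq> {}" and "Ops \<subseteq> {Union, Inter, Compl, Plus, Div}"
    and "wf_circuit Ops C"
  shows "\<exists>n::nat. n \<le> 2 ^ circuit_size C + 1 \<and>
           (\<forall>z\<ge>n. z \<in> circuit_set C \<longleftrightarrow> n \<in> circuit_set C)"
proof -
  have ok: "\<forall>x\<in>set (gates C). okg x"
  proof
    fix x assume "x \<in> set (gates C)"
    then obtain i where i: "i < length (gates C)" "x = gates C ! i" by (metis in_set_conv_nth)
    then have c: "case snd x of Inp a \<Rightarrow> True | Cmp p \<Rightarrow> Compl \<in> Ops
         | Bin o' p q \<Rightarrow> o' \<in> Ops \<and> o' \<noteq> Compl \<and> p \<le> q"
      using assms(3) unfolding wf_circuit_def by blast
    show "okg x"
    proof (cases "snd x")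
      case (Bin o' p q)
      then have "o' \<in> Ops" "o' \<noteq> Compl" using c by simp_all
      then have "o' \<in> {Union, Inter, Plus, Div}" using assms(2) by blast
      then show ?thesis unfolding okg_def using Bin by simp
    qed (simp_all add: okg_def)
  qed
  have init: "\<forall>g. \<exists>t\<le>2^0. evc ((\<lambda>_. {}) g) t" unfolding evc_def by blast
  have "\<forall>g. \<exists>t\<le>2^(0 + sum_list (map gate_size (gates C))). evc (foldl eval_step (\<lambda>_. {}) (gates C) g) t"
    by (rule fold_inv[OF ok init])
  then obtain t where t: "t \<le> 2 ^ circuit_size C" "evc (circuit_set C) t"
    unfolding circuit_set_def circuit_size_def by auto
  have "t \<le> 2 ^ circuit_size C + 1" using t(1) by linarith
  then show ?thesis using t(2) unfolding evc_def by blast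
qed

end
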